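(* Every tiling system is sofic; that is, for every finite collection $\mathcal P$ of prototiles, $\sigma:T(\mathcal P)\to T(\mathcal P)$ is a sofic system.
   Context: A prototile is a finite nonempty subset of $\mathbb Z$ with minimum $0$. For a finite collection $\mathcal P=\{P_1,\dots,P_K\}$ of prototiles, a tiling of $\mathbb Z$ by $\mathcal P$ is an expression $\mathbb Z=\bigcup_j(t_j+P_{k_j})$ as a disjoint union of translates of prototiles; it corresponds to the point $x\in\{1,\dots,K\}^{\mathbb Z}$ with $x_i=k$ iff $i\in t_j+P_{k_j}$ for some $j$ with $k_j=k$. $T(\mathcal P)$ is the set of all such points and $\sigma$ is the shift $(\sigma x)_i=x_{i+1}$; $\sigma:T(\mathcal P)\to T(\mathcal P)$ is called a tiling system. *)

theory Defs
  imports Main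
begin

definition prototile :: "int set \<Rightarrow> bool" where
  "prototile P \<longleftrightarrow> finite P \<and> P \<noteq> {} \<and> Min P = 0"

text \<open>A tiling is a set J of
  pairs (t,k) (translate t of prototile number k) such that every integer lies in
  exactly one of the tiles t + Ps k; the associated point x labels i by k.\<close>
definition tilings :: "nat \<Rightarrow> (nat \<Rightarrow> int set) \<Rightarrow> (int \<Rightarrow> nat) set" where
  "tilings K Ps = {x. \<exists>J :: (int \<times> nat) set.
      (\<forall>p\<in>J. snd p \<in> {1..K}) \<and>
      (\<forall>i. \<exists>!p. p \<in> J \<and> i \<in> (\<lambda>s. fst p + s) ` Ps (snd p)) \<and>
      (\<forall>i. \<forall>p\<in>J. i \<in> (\<lambda>s. fst p + s) ` Ps (snd p) \<longrightarrow> x i = snd p)}"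

definition is_SFT :: "(int \<Rightarrow> nat) set \<Rightarrow> bool" where
  "is_SFT Y \<longleftrightarrow> (\<exists>B N W. finite B \<and> N \<ge> 1 \<and> W \<subseteq> lists B \<and>
      Y = {y. \<forall>i. map (\<lambda>j. y (i + int j)) [0..<N] \<in> W})"

definition block_code :: "nat \<Rightarrow> ('b list \<Rightarrow> 'a) \<Rightarrow> (int \<Rightarrow> 'b) \<Rightarrow> (int \<Rightarrow> 'a)" where
  "block_code m phi y = (\<lambda>i. phi (map (\<lambda>j. y (i - int m + int j)) [0..<2*m+1]))"

definition sofic :: "(int \<Rightarrow> 'a) set \<Rightarrow> bool" where
  "sofic X \<longleftrightarrow> (\<exists>Y m (phi :: nat list \<Rightarrow> 'a). is_SFT Y \<and> X = block_code m phi ` Y)"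

end

theory Submission
  imports Defs "HOL-Library.Nat_Bijection"
begin

definition cd :: "nat \<Rightarrow> int \<Rightarrow> nat" where
  "cd k s = prod_encode (k, int_encode s)"

lemma cd_eq: "cd k s = cd k' s' \<longleftrightarrow> k = k' \<and> s = s'"
  by (auto simp: cd_def prod_encode_eq int_encode_eq)

lemma fst_decode_cd: "fst (prod_decode (cd k s)) = k"
  by (simp add: cd_def)

definition Good :: "nat \<Rightarrow> (nat \<Rightarrow> int set) \<Rightarrow> (int \<Rightarrow> nat) \<Rightarrow> bool" where
  "Good K Ps y \<longleftrightarrow> (\<forall>i. \<exists>k s. k \<in> {1..K} \<and> s \<in> Ps k \<and> y i = cd k s \<and>
      (\<forall>s'\<in>Ps k. y (i - s + s') = cd k s'))"

definition phi0 :: "nat list \<Rightarrow> nat" where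
  "phi0 w = fst (prod_decode (hd w))"

lemma block0: "block_code 0 phi0 y i = fst (prod_decode (y i))"
  by (simp add: block_code_def phi0_def)

lemma good_key:
  assumes G: "Good K Ps y" and yj: "y j = cd k s" and s: "s \<in> Ps k" and s': "s' \<in> Ps k"
  shows "y (j - s + s') = cd k s'"
proof -
  obtain k0 s0 where "y j = cd k0 s0" "\<forall>s'\<in>Ps k0. y (j - s0 + s') = cd k0 s'"
    using G unfolding Good_def by blast
  then show ?thesis using yj s' by (auto simp: cd_eq)
qed

lemma tilings_eq: "tilings K Ps = block_code 0 phi0 ` {y. Good K Ps y}"
proof
  show "block_code 0 phi0 ` {y. Good K Ps y} \<subseteq> tilings K Ps"
  proof
    fix x assume "x \<in> block_code 0 phi0 ` {y. Good K Ps y}"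
    then obtain y where G: "Good K Ps y" and x: "x = block_code 0 phi0 y" by auto
    define J where "J = {(i - s, k) | i s k. k \<in> {1..K} \<and> s \<in> Ps k \<and> y i = cd k s}"
    have key: "y i = cd (snd p) (i - fst p)"
      if "p \<in> J" "i \<in> (\<lambda>s. fst p + s) ` Ps (snd p)" for p i
    proof -
      from that obtain j s k where p: "p = (j - s, k)" "k \<in> {1..K}" "s \<in> Ps k" "y j = cd k s"
        unfolding J_def by blast
      from that p obtain s' where s': "s' \<in> Ps k" "i = j - s + s'" by auto
      have "y (j - s + s') = cd k s'" using good_key[OF G p(4) p(3) s'(1)] .
      then show ?thesis using p s' by simp
    qed
    have "(\<forall>p\<in>J. snd p \<in> {1..K})" unfolding J_def by auto
    moreover have "\<forall>i. \<exists>!p. p \<in> J \<and> i \<in> (\<lambda>s. fst p + s) ` Ps (snd p)"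
    proof
      fix i
      obtain k s where ks: "k \<in> {1..K}" "s \<in> Ps k" "y i = cd k s"
        using G unfolding Good_def by blast
      have ex: "(i - s, k) \<in> J \<and> i \<in> (\<lambda>t. fst (i - s, k) + t) ` Ps (snd (i - s, k))"
        using ks unfolding J_def by force
      show "\<exists>!p. p \<in> J \<and> i \<in> (\<lambda>s. fst p + s) ` Ps (snd p)"
      proof (rule ex1I[where a="(i - s, k)"])
        show "(i - s, k) \<in> J \<and> i \<in> (\<lambda>t. fst (i - s, k) + t) ` Ps (snd (i - s, k))" using ex by simp
      next
        fix q assume q: "q \<in> J \<and> i \<in> (\<lambda>s. fst q + s) ` Ps (snd q)"
        have "y i = cd (snd q) (i - fst q)" using key q by blast
        with ks(3) have "snd q = k" "i - fst q = s" by (auto simp: cd_eq)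
        then show "q = (i - s, k)" by (cases q) auto
      qed
    qed
    moreover have "\<forall>i. \<forall>p\<in>J. i \<in> (\<lambda>s. fst p + s) ` Ps (snd p) \<longrightarrow> x i = snd p"
      using key by (auto simp: x block0 fst_decode_cd)
    ultimately show "x \<in> tilings K Ps" unfolding tilings_def by blast
  qed
next
  show "tilings K Ps \<subseteq> block_code 0 phi0 ` {y. Good K Ps y}"
  proof
    fix x assume "x \<in> tilings K Ps"
    then obtain J :: "(int \<times> nat) set" where
      J1: "\<forall>p\<in>J. snd p \<in> {1..K}" and
      J2: "\<forall>i. \<exists>!p. p \<in> J \<and> i \<in> (\<lambda>s. fst p + s) ` Ps (snd p)" and
      J3: "\<forall>i. \<forall>p\<in>J. i \<in> (\<lambda>s. fst p + s) ` Ps (snd p) \<longrightarrow> x i = snd p"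
      unfolding tilings_def by blast
    define P where "P i = (THE p. p \<in> J \<and> i \<in> (\<lambda>s. fst p + s) ` Ps (snd p))" for i
    have PP: "P i \<in> J \<and> i \<in> (\<lambda>s. fst (P i) + s) ` Ps (snd (P i))" for i
      unfolding P_def using theI'[OF J2[rule_format, of i]] .
    have Puniq: "P i = p" if "p \<in> J" "i \<in> (\<lambda>s. fst p + s) ` Ps (snd p)" for i p
      unfolding P_def using the1_equality[OF J2[rule_format, of i]] that by blast
    define y where "y i = cd (snd (P i)) (i - fst (P i))" for i
    have "Good K Ps y"
      unfolding Good_def
    proof
      fix i
      let ?p = "P i"
      obtain s0 where s0: "s0 \<in> Ps (snd ?p)" "i = fst ?p + s0" using PP[of i] by auto
      have k1: "snd ?p \<in> {1..K}" using J1 PP[of i] by blast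
      have k2: "\<forall>s'\<in>Ps (snd ?p). y (i - (i - fst ?p) + s') = cd (snd ?p) s'"
      proof
        fix s' assume s': "s' \<in> Ps (snd ?p)"
        have "P (fst ?p + s') = ?p" using Puniq PP[of i] s' by blast
        then show "y (i - (i - fst ?p) + s') = cd (snd ?p) s'" by (simp add: y_def)
      qed
      show "\<exists>k s. k \<in> {1..K} \<and> s \<in> Ps k \<and> y i = cd k s \<and>
        (\<forall>s'\<in>Ps k. y (i - s + s') = cd k s')"
      proof (intro exI conjI)
        have "i - fst ?p = s0" using s0(2) by linarith
        then show "i - fst ?p \<in> Ps (snd ?p)" using s0(1) by simp
        show "y i = cd (snd ?p) (i - fst ?p)" by (simp add: y_def)
      qed (use k1 k2 in auto)
    qed
    moreover have "x = block_code 0 phi0 y"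
    proof
      fix i show "x i = block_code 0 phi0 y i"
        using J3 PP[of i] by (auto simp: block0 y_def fst_decode_cd)
    qed
    ultimately show "x \<in> block_code 0 phi0 ` {y. Good K Ps y}" by blast
  qed
qed


lemma good_SFT:
  assumes bd: "\<forall>k\<in>{1..K}. \<forall>s\<in>Ps k. \<bar>s\<bar> \<le> int D"
  shows "is_SFT {y. Good K Ps y}"
proof -
  define B where "B = (\<lambda>(k,s). cd k s) ` Sigma {1..K} Ps"
  define N where "N = 4 * D + 1"
  define W where "W = {w. length w = N \<and> w \<in> lists B \<and>
     (\<forall>k s. w ! (2*D) = cd k s \<longrightarrow> s \<in> Ps k \<longrightarrow>
        (\<forall>s'\<in>Ps k. w ! nat (int (2*D) - s + s') = cd k s'))}"
  have finB: "finite B"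
  proof -
    have "Sigma {1..K} Ps \<subseteq> {1..K} \<times> {-int D..int D}" using bd by fastforce
    then have "finite (Sigma {1..K} Ps)" by (rule finite_subset) auto
    then show ?thesis unfolding B_def by simp
  qed
  have inB: "y \<in> B \<longleftrightarrow> (\<exists>k s. k \<in> {1..K} \<and> s \<in> Ps k \<and> y = cd k s)" for y
    unfolding B_def by auto
  have nthw: "j < N \<Longrightarrow> (map f [0..<N]) ! j = f j" for j and f :: "nat \<Rightarrow> nat"
    by simp
  have DN: "2*D < N" unfolding N_def by simp
  have "{y. Good K Ps y} = {y. \<forall>i. map (\<lambda>j. y (i + int j)) [0..<N] \<in> W}"
  proof (intro set_eqI iffI; simp)
    fix y assume G: "Good K Ps y"
    show "\<forall>i. map (\<lambda>j. y (i + int j)) [0..<N] \<in> W"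
    proof
      fix i
      let ?w = "map (\<lambda>j. y (i + int j)) [0..<N]"
      have "?w \<in> lists B"
      proof -
        have "y m \<in> B" for m using G unfolding Good_def inB by blast
        then show ?thesis by auto
      qed
      moreover have "\<forall>k s. ?w ! (2*D) = cd k s \<longrightarrow> s \<in> Ps k \<longrightarrow>
        (\<forall>s'\<in>Ps k. ?w ! nat (int (2*D) - s + s') = cd k s')"
      proof (intro allI impI ballI)
        fix k s s' assume h: "?w ! (2*D) = cd k s" "s \<in> Ps k" "s' \<in> Ps k"
        have y2: "y (i + int (2*D)) = cd k s" using h(1) nthw[OF DN] by simp
        obtain k0 s0 where "y (i + int (2*D)) = cd k0 s0" "k0 \<in> {1..K}" "s0 \<in> Ps k0"
          using G unfolding Good_def by blast
        with y2 have "k \<in> {1..K}" by (auto simp: cd_eq)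
        then have "\<bar>s\<bar> \<le> int D" "\<bar>s'\<bar> \<le> int D" using bd h by auto
        then have r: "0 \<le> int (2*D) - s + s'" "nat (int (2*D) - s + s') < N"
          by (auto simp: N_def)
        have "?w ! nat (int (2*D) - s + s') = y (i + int (2*D) - s + s')"
          using r nthw by (simp add: algebra_simps)
        also have "\<dots> = cd k s'" using good_key[OF G y2 h(2) h(3)] by (simp add: algebra_simps)
        finally show "?w ! nat (int (2*D) - s + s') = cd k s'" .
      qed
      ultimately show "?w \<in> W" unfolding W_def by simp
    qed
  next
    fix y assume A: "\<forall>i. map (\<lambda>j. y (i + int j)) [0..<N] \<in> W"
    show "Good K Ps y" unfolding Good_def
    proof
      fix i
      let ?w = "map (\<lambda>j. y (i - int (2*D) + int j)) [0..<N]"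
      have w: "?w \<in> W" using A[rule_format, of "i - int (2*D)"] .
      have c: "?w ! (2*D) = y i" using nthw[OF DN] by simp
      have "?w \<in> lists B" "length ?w = N" using w unfolding W_def by auto
      then have "?w ! (2*D) \<in> B" using DN nth_mem[of "2*D" ?w] by (auto simp: in_lists_conv_set simp del: length_map)
      then have "y i \<in> B" using c by simp
      then obtain k s where ks: "k \<in> {1..K}" "s \<in> Ps k" "y i = cd k s" using inB by blast
      have "\<forall>s'\<in>Ps k. y (i - s + s') = cd k s'"
      proof
        fix s' assume s': "s' \<in> Ps k"
        have "\<bar>s\<bar> \<le> int D" "\<bar>s'\<bar> \<le> int D" using bd ks s' by auto
        then have r: "0 \<le> int (2*D) - s + s'" "nat (int (2*D) - s + s') < N"
          by (auto simp: N_def)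
        have "?w ! nat (int (2*D) - s + s') = cd k s'"
          using w c ks s' unfolding W_def by auto
        moreover have "?w ! nat (int (2*D) - s + s') = y (i - s + s')"
          using r nthw by (simp add: algebra_simps)
        ultimately show "y (i - s + s') = cd k s'" by simp
      qed
      then show "\<exists>k s. k \<in> {1..K} \<and> s \<in> Ps k \<and> y i = cd k s \<and>
        (\<forall>s'\<in>Ps k. y (i - s + s') = cd k s')" using ks by blast
    qed
  qed
  moreover have "W \<subseteq> lists B" unfolding W_def by auto
  moreover have "N \<ge> 1" unfolding N_def by simp
  ultimately show ?thesis unfolding is_SFT_def using finB by blast
qed

theorem mainTheorem4:
  fixes K :: nat and Ps :: "nat \<Rightarrow> int set"
  assumes "\<forall>k\<in>{1..K}. prototile (Ps k)"
    and "inj_on Ps {1..K}"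
  shows "sofic (tilings K Ps)"
proof -
  define S where "S = (\<Union>k\<in>{1..K}. Ps k)"
  have "finite S" unfolding S_def using assms(1) by (auto simp: prototile_def)
  define D where "D = nat (Max (insert 0 (abs ` S)))"
  have "\<forall>k\<in>{1..K}. \<forall>s\<in>Ps k. \<bar>s\<bar> \<le> int D"
  proof (intro ballI)
    fix k s assume "k \<in> {1..K}" "s \<in> Ps k"
    then have "\<bar>s\<bar> \<in> insert 0 (abs ` S)" unfolding S_def by blast
    then have "\<bar>s\<bar> \<le> Max (insert 0 (abs ` S))" using \<open>finite S\<close> by simp
    then show "\<bar>s\<bar> \<le> int D" unfolding D_def by linarith
  qed
  then have "is_SFT {y. Good K Ps y}" by (rule good_SFT)
  then show ?thesis unfolding sofic_def using tilings_eq by blast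
qed

end
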